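(* Let $G$ be a finite group and $N$ a normal subgroup of $G$ with $1\neq N\neq G$. If $\mathcal{D}(G)-\mathcal{D}_G(N)=m$, then $\mathcal{D}(G/N)\le m-1$. In particular, $\mathcal{D}(G/N)\le \mathcal{D}(G)-1$.
   Context: All groups are finite. $\mathcal{D}(G)$ denotes the number of conjugacy classes of nontrivial subgroups $H$ of $G$ with $N_G(H)\neq H$. For $N\trianglelefteq G$, $\mathcal{D}_G(N)$ denotes the number of $G$-conjugacy classes of nontrivial subgroups $H$ of $G$ with $N_G(H)\neq H$ that are properly contained in $N$. *)

theory Defs
  imports "HOL-Algebra.Algebra"
begin

definition conj_class :: "('a, 'b) monoid_scheme \<Rightarrow> 'a set \<Rightarrow> 'a set set" where
  "conj_class G H = (\<lambda>g. g <#\<^bsub>G\<^esub> H #>\<^bsub>G\<^esub> inv\<^bsub>G\<^esub> g) ` carrier G"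

definition non_self_norm :: "('a, 'b) monoid_scheme \<Rightarrow> 'a set set" where
  "non_self_norm G = {H. subgroup H G \<and> H \<noteq> {\<one>\<^bsub>G\<^esub>} \<and> normalizer G H \<noteq> H}"

definition DD :: "('a, 'b) monoid_scheme \<Rightarrow> nat" where
  "DD G = card (conj_class G ` non_self_norm G)"

definition DD_rel :: "('a, 'b) monoid_scheme \<Rightarrow> 'a set \<Rightarrow> nat" where
  "DD_rel G N = card (conj_class G ` {H \<in> non_self_norm G. H \<subset> N})"

end

theory Submission
  imports Defs
begin

lemma (in normal) conj_coset:
  assumes g: "g \<in> carrier G" and q: "q \<in> rcosets H"
  shows "(H #> g) <#> q <#> (H #> inv g) = g <# q #> inv g"
proof -
  obtain y where y: "y \<in> carrier G" "q = H #> y" using q unfolding RCOSETS_def by auto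
  have "(H #> g) <#> q <#> (H #> inv g) = H #> (g \<otimes> y \<otimes> inv g)"
    using g y by (simp add: rcos_sum)
  also have "\<dots> = g <# q #> inv g"
  proof (intro Set.set_eqI iffI)
    fix x assume "x \<in> H #> (g \<otimes> y \<otimes> inv g)"
    then obtain n where n: "n \<in> H" "x = n \<otimes> (g \<otimes> y \<otimes> inv g)" unfolding r_coset_def by auto
    have nG: "n \<in> carrier G" using n subset by auto
    have "inv g \<otimes> n \<otimes> g \<in> H" using inv_op_closed1 g n by auto
    moreover have "x = g \<otimes> ((inv g \<otimes> n \<otimes> g) \<otimes> y) \<otimes> inv g"
      using n(2) g y nG by (simp add: m_assoc[symmetric])
    ultimately show "x \<in> g <# q #> inv g" unfolding y(2) r_coset_def l_coset_def by auto
  next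
    fix x assume "x \<in> g <# q #> inv g"
    then obtain n where n: "n \<in> H" "x = g \<otimes> (n \<otimes> y) \<otimes> inv g" unfolding y(2) r_coset_def l_coset_def by auto
    have nG: "n \<in> carrier G" using n subset by auto
    have "g \<otimes> n \<otimes> inv g \<in> H" using inv_op_closed2 g n by auto
    moreover have "x = (g \<otimes> n \<otimes> inv g) \<otimes> (g \<otimes> y \<otimes> inv g)"
      using n(2) g y nG by (simp add: m_assoc inv_solve_left)
    ultimately show "x \<in> H #> (g \<otimes> y \<otimes> inv g)" unfolding r_coset_def by auto
  qed
  finally show ?thesis .
qed

lemma (in normal) conj_quot:
  assumes g: "g \<in> carrier G" and Q: "Q \<subseteq> rcosets H"
  shows "(H #> g) <#\<^bsub>G Mod H\<^esub> Q #>\<^bsub>G Mod H\<^esub> inv\<^bsub>G Mod H\<^esub> (H #> g) = (\<lambda>q. g <# q #> inv g) ` Q"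
proof -
  have c: "H #> g \<in> carrier (G Mod H)" using g by (simp add: carrier_FactGroup)
  have i: "inv\<^bsub>G Mod H\<^esub> (H #> g) = H #> inv g" using inv_FactGroup[OF c] rcos_inv[OF g] by simp
  show ?thesis unfolding i
    using conj_coset[OF g] Q unfolding l_coset_def r_coset_def[of "G Mod H"] by auto
qed

lemma conj_union:
  "\<Union>((\<lambda>q. g <#\<^bsub>G\<^esub> q #>\<^bsub>G\<^esub> x) ` Q) = g <#\<^bsub>G\<^esub> (\<Union>Q) #>\<^bsub>G\<^esub> x"
  unfolding l_coset_def r_coset_def by auto

lemma (in normal) union_inj:
  assumes "Q \<subseteq> rcosets H" shows "Q = (\<lambda>x. H #> x) ` (\<Union>Q)"
proof
  show "Q \<subseteq> (\<lambda>x. H #> x) ` (\<Union>Q)"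
  proof
    fix q assume q: "q \<in> Q"
    then obtain y where y: "y \<in> carrier G" "q = H #> y" using assms unfolding RCOSETS_def by auto
    then have "y \<in> q" using rcos_self subgroup_axioms by auto
    then show "q \<in> (\<lambda>x. H #> x) ` (\<Union>Q)" using q y by auto
  qed
next
  show "(\<lambda>x. H #> x) ` (\<Union>Q) \<subseteq> Q"
  proof
    fix c assume "c \<in> (\<lambda>x. H #> x) ` (\<Union>Q)"
    then obtain x q where xq: "q \<in> Q" "x \<in> q" "c = H #> x" by auto
    then obtain y where y: "y \<in> carrier G" "q = H #> y" using assms unfolding RCOSETS_def by auto
    then have "H #> y = H #> x" using xq is_subgroup repr_independence by auto
    then show "c \<in> Q" using xq y by auto
  qed
qed

lemma (in group) sub_normalizer:
  assumes "subgroup H G" shows "H \<subseteq> normalizer G H"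
  unfolding normalizer_def
proof
  fix x assume xH: "x \<in> H"
  from xH have xG : "x \<in> carrier G" using subgroup.subset assms by auto
  have "x <# H = H"
    by (metis \<open>x \<in> H\<close> assms group.lcos_mult_one is_group
       l_repr_independence one_closed subgroup.subset)
  moreover have "H #> inv x = H"
    by (simp add: xH assms is_group subgroup.rcos_const subgroup.m_inv_closed)
  ultimately have "x <# H #> (inv x) = H" by simp
  thus " x \<in> stabilizer G (\<lambda>g. \<lambda>H\<in>{H. H \<subseteq> carrier G}. g <# H #> inv g) H"
    using assms xG subgroup.subset unfolding stabilizer_def by auto
qed

lemma (in group) self_in_cc: "H \<subseteq> carrier G \<Longrightarrow> H \<in> conj_class G H"
  unfolding conj_class_def
proof
  assume "H \<subseteq> carrier G"
  then show "H = \<one> <# H #> inv \<one>" unfolding l_coset_def r_coset_def by force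
qed simp

lemma conj_mono: "H \<subseteq> K \<Longrightarrow> g <#\<^bsub>G\<^esub> H #>\<^bsub>G\<^esub> x \<subseteq> g <#\<^bsub>G\<^esub> K #>\<^bsub>G\<^esub> x"
  unfolding l_coset_def r_coset_def by auto

lemma (in normal) normal_conj: "g \<in> carrier G \<Longrightarrow> g <# H #> inv g = H"
proof (intro Set.set_eqI iffI)
  fix x assume g: "g \<in> carrier G" and "x \<in> g <# H #> inv g"
  then obtain h where "h \<in> H" "x = g \<otimes> h \<otimes> inv g" unfolding l_coset_def r_coset_def by auto
  then show "x \<in> H" using inv_op_closed2 g by auto
next
  fix x assume g: "g \<in> carrier G" and x: "x \<in> H"
  have xG: "x \<in> carrier G" using x subset by auto
  have "inv g \<otimes> x \<otimes> g \<in> H" using inv_op_closed1 g x by auto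
  moreover have "x = g \<otimes> (inv g \<otimes> x \<otimes> g) \<otimes> inv g" 
  proof -
    have "g \<otimes> (inv g \<otimes> x \<otimes> g) \<otimes> inv g = (g \<otimes> inv g) \<otimes> x \<otimes> (g \<otimes> inv g)"
      using g xG by (simp add: m_assoc) (metis inv_closed m_assoc r_inv l_one)
    also have "\<dots> = x" by (simp only: r_inv[OF g] l_one[OF xG] r_one[OF xG])
    finally show ?thesis by simp
  qed
  ultimately show "x \<in> g <# H #> inv g" unfolding l_coset_def r_coset_def by force
qed

lemma (in normal) cc_normal: "conj_class G H = {H}"
  unfolding conj_class_def using normal_conj by auto

lemma (in normal) cc_quot:
  assumes Q: "Q \<subseteq> rcosets H"
  shows "(`) Union (conj_class (G Mod H) Q) = conj_class G (\<Union>Q)"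
proof -
  have "conj_class (G Mod H) Q = (\<lambda>g. (H #> g) <#\<^bsub>G Mod H\<^esub> Q #>\<^bsub>G Mod H\<^esub> inv\<^bsub>G Mod H\<^esub> (H #> g)) ` carrier G"
    unfolding conj_class_def carrier_FactGroup image_image by simp
  also have "\<dots> = (\<lambda>g. (\<lambda>q. g <# q #> inv g) ` Q) ` carrier G"
    using conj_quot[OF _ Q] by auto
  finally have "(`) Union (conj_class (G Mod H) Q) = (`) Union ((\<lambda>g. (\<lambda>q. g <# q #> inv g) ` Q) ` carrier G)" by simp
  then show ?thesis unfolding conj_class_def image_image conj_union by simp
qed

lemma (in normal) cc_quot_sub:
  assumes Q: "Q \<subseteq> rcosets H"
  shows "conj_class (G Mod H) Q \<subseteq> Pow (rcosets H)"
proof -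
  interpret GN: group "G Mod H" by (rule factorgroup_is_group)
  have Q': "Q \<subseteq> carrier (G Mod H)" using Q by (simp add: FactGroup_def)
  have "\<And>c. c \<in> carrier (G Mod H) \<Longrightarrow> c <#\<^bsub>G Mod H\<^esub> Q #>\<^bsub>G Mod H\<^esub> inv\<^bsub>G Mod H\<^esub> c \<subseteq> carrier (G Mod H)"
    using Q' unfolding l_coset_def r_coset_def by (auto simp del: mult_FactGroup intro!: GN.m_closed)
  then show ?thesis unfolding conj_class_def by (auto simp: FactGroup_def)
qed

lemma (in normal) union_inj_on: "inj_on Union (Pow (rcosets H))"
proof (rule inj_onI)
  fix P1 P2 assume X: "P1 \<in> Pow (rcosets H)" and Y: "P2 \<in> Pow (rcosets H)" and XY: "\<Union>P1 = \<Union>P2"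
  have "P1 = (\<lambda>x. H #> x) ` (\<Union>P1)" using X union_inj by blast
  also have "\<dots> = (\<lambda>x. H #> x) ` (\<Union>P2)" using XY by simp
  also have "\<dots> = P2" using Y union_inj by blast
  finally show "P1 = P2" .
qed

theorem mainTheorem2:
  fixes G :: "('a, 'b) monoid_scheme" and N :: "'a set" and m :: int
  assumes "group G" and "finite (carrier G)" and "N \<lhd> G"
    and "N \<noteq> {\<one>\<^bsub>G\<^esub>}" and "N \<noteq> carrier G"
    and "int (DD G) - int (DD_rel G N) = m"
  shows "int (DD (G Mod N)) \<le> m - 1 \<and> DD (G Mod N) \<le> DD G - 1"
proof -
  interpret normal N G by (rule assms(3))
  interpret GN: group "G Mod N" by (rule factorgroup_is_group)
  define A where "A = non_self_norm G"
  define B where "B = {H \<in> non_self_norm G. H \<subset> N}"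
  define S where "S = non_self_norm (G Mod N)"
  define cc where "cc = conj_class G"
  define T where "T = cc ` A - cc ` B - {cc N}"
  have crG: "carrier (G Mod N) = rcosets\<^bsub>G\<^esub> N" by (simp add: FactGroup_def)
  have finA: "finite (cc ` A)"
  proof -
    have "A \<subseteq> Pow (carrier G)" unfolding A_def non_self_norm_def using subgroup.subset by auto
    then show ?thesis using assms(2) finite_subset by blast
  qed
  have BA: "cc ` B \<subseteq> cc ` A" unfolding A_def B_def by auto
  have ccN: "cc N = {N}" unfolding cc_def by (rule cc_normal)
  have normN: "normalizer G N = carrier G"
    unfolding normalizer_def stabilizer_def using normal_conj subset by auto
  have NA: "N \<in> A" unfolding A_def non_self_norm_def using assms(4,5) normN is_subgroup by auto
  have NB: "cc N \<notin> cc ` B"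
  proof
    assume "cc N \<in> cc ` B"
    then obtain H where H: "H \<in> B" "cc N = cc H" by auto
    have "H \<subseteq> carrier G" using H(1) unfolding B_def non_self_norm_def using subgroup.subset by auto
    then have "H \<in> cc H" unfolding cc_def by (rule self_in_cc)
    then have "H = N" using H ccN by auto
    then show False using H(1) unfolding B_def by auto
  qed
  have cardT: "card (cc ` A) = card (cc ` B) + card T + 1"
  proof -
    have "card (cc ` A) = card (cc ` B) + card (cc ` A - cc ` B)"
      using card_Diff_subset[OF finite_subset[OF BA finA] BA] card_mono[OF finA BA] by simp
    moreover have "card (cc ` A - cc ` B) = card T + 1"
    proof -
      have "cc N \<in> cc ` A - cc ` B" using NA NB by auto
      moreover have "finite (cc ` A - cc ` B)" using finA by auto
      ultimately show ?thesis unfolding T_def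
        by (metis (no_types, lifting) Diff_iff Suc_eq_plus1 card_Diff_singleton card_gt_0_iff Suc_pred' empty_iff)
    qed
    ultimately show ?thesis by simp
  qed
  have key: "cc (\<Union>Q) \<in> T" if Q: "Q \<in> S" for Q
  proof -
    have sQ: "subgroup Q (G Mod N)" and Q1: "Q \<noteq> {N}" and nQ: "normalizer (G Mod N) Q \<noteq> Q"
      using Q unfolding S_def non_self_norm_def by auto
    have Qr: "Q \<subseteq> rcosets\<^bsub>G\<^esub> N" using subgroup.subset[OF sQ] crG by auto
    define U where "U = \<Union>Q"
    have sU: "subgroup U G" unfolding U_def by (rule factgroup_subgroup_union_subgroup[OF sQ])
    have UG: "U \<subseteq> carrier G" using subgroup.subset[OF sU] .
    have Uch: "U = {x \<in> carrier G. N #>\<^bsub>G\<^esub> x \<in> Q}" unfolding U_def by (rule factgroup_subgroup_union_char[OF sQ])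
    have "N \<in> Q" using subgroup.one_closed[OF sQ] by simp
    then have NU: "N \<subseteq> U" unfolding U_def by auto
    have UN: "U \<noteq> N"
    proof -
      obtain c where c: "c \<in> Q" "c \<noteq> N" using Q1 \<open>N \<in> Q\<close> by auto
      then obtain y where y: "y \<in> carrier G" "c = N #>\<^bsub>G\<^esub> y" using Qr unfolding RCOSETS_def by auto
      have "y \<in> U" using y c Uch by auto
      moreover have "y \<notin> N" using y c rcos_const by auto
      ultimately show ?thesis by auto
    qed
    have U1: "U \<noteq> {\<one>\<^bsub>G\<^esub>}" using NU assms(4) one_closed by auto
    have nU: "normalizer G U \<noteq> U"
    proof -
      have "Q \<subseteq> normalizer (G Mod N) Q" by (rule GN.sub_normalizer[OF sQ])
      then obtain c where c: "c \<in> normalizer (G Mod N) Q" "c \<notin> Q" using nQ by auto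
      have cQ: "c <#\<^bsub>G Mod N\<^esub> Q #>\<^bsub>G Mod N\<^esub> inv\<^bsub>G Mod N\<^esub> c = Q" and cG: "c \<in> carrier (G Mod N)"
        using c(1) subgroup.subset[OF sQ] unfolding normalizer_def stabilizer_def by auto
      obtain g where g: "g \<in> carrier G" "c = N #>\<^bsub>G\<^esub> g" using cG by (auto simp: carrier_FactGroup)
      have "(\<lambda>q. g <#\<^bsub>G\<^esub> q #>\<^bsub>G\<^esub> inv\<^bsub>G\<^esub> g) ` Q = Q" using conj_quot[OF g(1) Qr] cQ g(2) by simp
      then have "g <#\<^bsub>G\<^esub> U #>\<^bsub>G\<^esub> inv\<^bsub>G\<^esub> g = U" unfolding U_def conj_union[symmetric] by simp
      then have "g \<in> normalizer G U" using g UG unfolding normalizer_def stabilizer_def by auto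
      moreover have "g \<notin> U" using Uch c g by auto
      ultimately show ?thesis by auto
    qed
    have UA: "U \<in> A" unfolding A_def non_self_norm_def using sU U1 nU by auto
    have UinU: "U \<in> cc U" unfolding cc_def using UG by (rule self_in_cc)
    have "cc U \<notin> cc ` B"
    proof
      assume "cc U \<in> cc ` B"
      then obtain H where H: "H \<in> B" "cc U = cc H" by auto
      then obtain g where g: "g \<in> carrier G" "U = g <#\<^bsub>G\<^esub> H #>\<^bsub>G\<^esub> inv\<^bsub>G\<^esub> g" using UinU unfolding cc_def conj_class_def by auto
      have "H \<subseteq> N" using H(1) unfolding B_def by auto
      then have "U \<subseteq> N" using g conj_mono[of H N G g "inv\<^bsub>G\<^esub> g"] normal_conj by auto
      then show False using NU UN by auto
    qed
    moreover have "cc U \<noteq> cc N" using UinU ccN UN by auto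
    ultimately show ?thesis using UA unfolding T_def U_def by auto
  qed
  have phi: "(`) Union (conj_class (G Mod N) Q) = cc (\<Union>Q)" if "Q \<in> S" for Q
  proof -
    have "Q \<subseteq> rcosets\<^bsub>G\<^esub> N" using that unfolding S_def non_self_norm_def using subgroup.subset crG by auto
    then show ?thesis unfolding cc_def by (rule cc_quot)
  qed
  have injU: "inj_on Union (Pow (rcosets\<^bsub>G\<^esub> N))" by (rule union_inj_on)
  have inj: "inj_on ((`) Union) (conj_class (G Mod N) ` S)"
  proof (rule inj_on_subset[OF inj_on_image_Pow[OF injU]])
    show "conj_class (G Mod N) ` S \<subseteq> Pow (Pow (rcosets\<^bsub>G\<^esub> N))"
    proof
      fix C assume "C \<in> conj_class (G Mod N) ` S"
      then obtain Q where Q: "Q \<in> S" "C = conj_class (G Mod N) Q" by auto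
      have "Q \<subseteq> rcosets\<^bsub>G\<^esub> N" using Q(1) subgroup.subset crG unfolding S_def non_self_norm_def by auto
      then show "C \<in> Pow (Pow (rcosets\<^bsub>G\<^esub> N))" using cc_quot_sub Q(2) by auto
    qed
  qed
  have "DD (G Mod N) = card ((`) Union ` conj_class (G Mod N) ` S)"
    unfolding DD_def S_def[symmetric] using card_image[OF inj] by simp
  also have "\<dots> \<le> card T"
  proof (rule card_mono)
    show "finite T" unfolding T_def using finA by auto
    show "(`) Union ` conj_class (G Mod N) ` S \<subseteq> T" using key phi by auto
  qed
  finally have le: "DD (G Mod N) \<le> card T" .
  have eq: "DD G = DD_rel G N + card T + 1"
    unfolding DD_def DD_rel_def using cardT unfolding A_def B_def cc_def by simp
  show ?thesis using le eq assms(6) by auto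
qed

end
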